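(* For each of the following pairs $(X,i)$ there is no infinite binary word $\mathbf{x}$ with $p_i\,\mu(\mathbf{x})\in X$: $(B,2)$, $(B,4)$, $(D,2)$, $(D,4)$, $(C,1)$, $(C,2)$, $(C,4)$, $(E,2)$, $(E,3)$, $(E,4)$, $(F,0)$, $(F,1)$, $(F,2)$, $(F,4)$, $(J,2)$, $(J,3)$, $(J,4)$, $(K,2)$, $(K,3)$, $(K,4)$, $(I,0)$, $(I,2)$, $(I,3)$, $(I,4)$, $(G,1)$, $(G,2)$, $(G,4)$, $(H,1)$, $(H,2)$, $(H,4)$.
   Context: $\Sigma=\{0,1\}$. An overlap is a word $axaxa$ with $a\in\Sigma$, $x\in\Sigma^*$; a word is overlap-free if it has no overlap as a factor. $\mathcal{O}$ is the set of right-infinite binary overlap-free words, and $\mu$ is the morphism $0\mapsto01$, $1\mapsto10$. $p_0=\epsilon$, $p_1=0$, $p_2=00$, $p_3=1$, $p_4=11$. Subsets of $\Sigma^\omega$: $A=\mathcal{O}$; $B=\{\mathbf{x}: 1\mathbf{x}\in\mathcal{O}\}$; $C=\{\mathbf{x}: 1\mathbf{x}\in\mathcal{O}$ and $\mathbf{x}$ begins with $101\}$; $D=\{\mathbf{x}: 0\mathbf{x}\in\mathcal{O}\}$; $E=\{\mathbf{x}: 0\mathbf{x}\in\mathcal{O}$ and $\mathbf{x}$ begins with $010\}$; $F=\{\mathbf{x}: 0\mathbf{x}\in\mathcal{O}$ and $\mathbf{x}$ begins with $11\}$; $G=\{\mathbf{x}: 0\mathbf{x}\in\mathcal{O}$ and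 $\mathbf{x}$ begins with $1\}$; $H=\{\mathbf{x}: 1\mathbf{x}\in\mathcal{O}$ and $\mathbf{x}$ begins with $1\}$; $I=\{\mathbf{x}: 1\mathbf{x}\in\mathcal{O}$ and $\mathbf{x}$ begins with $00\}$; $J=\{\mathbf{x}: 1\mathbf{x}\in\mathcal{O}$ and $\mathbf{x}$ begins with $0\}$; $K=\{\mathbf{x}: 0\mathbf{x}\in\mathcal{O}$ and $\mathbf{x}$ begins with $0\}$. *)

theory Defs
  imports Main
begin

text \<open>Binary letters: False = 0, True = 1. Finite words are bool lists,
right-infinite words are functions nat \<Rightarrow> bool.\<close>

type_synonym iword = "nat \<Rightarrow> bool"

definition prep :: "bool list \<Rightarrow> iword \<Rightarrow> iword" where
  "prep p x = (\<lambda>n. if n < length p then p ! n else x (n - length p))"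

definition is_factor :: "bool list \<Rightarrow> iword \<Rightarrow> bool" where
  "is_factor w x = (\<exists>i. w = map x [i..<i + length w])"

definition is_overlap :: "bool list \<Rightarrow> bool" where
  "is_overlap w = (\<exists>a xs. w = a # xs @ a # xs @ [a])"

definition overlap_free :: "iword \<Rightarrow> bool" where
  "overlap_free x = (\<forall>w. is_factor w x \<longrightarrow> \<not> is_overlap w)"

definition OF :: "iword set" where
  "OF = {x. overlap_free x}"

text \<open>The Thue--Morse morphism mu: 0 \<mapsto> 01, 1 \<mapsto> 10, applied to an infinite word.\<close>
definition mu :: "iword \<Rightarrow> iword" where
  "mu x = (\<lambda>n. if even n then x (n div 2) else \<not> x (n div 2))"

definition begins_with :: "bool list \<Rightarrow> iword \<Rightarrow> bool" where
  "begins_with w x = (\<forall>i < length w. x i = w ! i)"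

fun pw :: "nat \<Rightarrow> bool list" where
  "pw 0 = []"
| "pw (Suc 0) = [False]"
| "pw (Suc (Suc 0)) = [False, False]"
| "pw (Suc (Suc (Suc 0))) = [True]"
| "pw (Suc (Suc (Suc (Suc 0)))) = [True, True]"
| "pw _ = []"

definition SB :: "iword set" where "SB = {x. prep [True] x \<in> OF}"
definition SC :: "iword set" where "SC = {x. prep [True] x \<in> OF \<and> begins_with [True, False, True] x}"
definition SD :: "iword set" where "SD = {x. prep [False] x \<in> OF}"
definition SE :: "iword set" where "SE = {x. prep [False] x \<in> OF \<and> begins_with [False, True, False] x}"
definition SF :: "iword set" where "SF = {x. prep [False] x \<in> OF \<and> begins_with [True, True] x}"
definition SG :: "iword set" where "SG = {x. prep [False] x \<in> OF \<and> begins_with [True] x}"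
definition SH :: "iword set" where "SH = {x. prep [True] x \<in> OF \<and> begins_with [True] x}"
definition SI :: "iword set" where "SI = {x. prep [True] x \<in> OF \<and> begins_with [False, False] x}"
definition SJ :: "iword set" where "SJ = {x. prep [True] x \<in> OF \<and> begins_with [False] x}"
definition SK :: "iword set" where "SK = {x. prep [False] x \<in> OF \<and> begins_with [False] x}"

end

theory Submission
  imports Defs
begin

definition hasov :: "bool list \<Rightarrow> bool" where
  "hasov w = list_ex (\<lambda>i. list_ex (\<lambda>n. is_overlap (take n (drop i w))) [0..<Suc (length w)]) [0..<Suc (length w)]"

lemma is_overlap_code:
  "is_overlap u = list_ex (\<lambda>k. u = hd u # take k (tl u) @ hd u # take k (tl u) @ [hd u]) [0..<length u]"
proof
  assume "is_overlap u"
  then obtain a xs where u: "u = a # xs @ a # xs @ [a]" unfolding is_overlap_def by blast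
  show "list_ex (\<lambda>k. u = hd u # take k (tl u) @ hd u # take k (tl u) @ [hd u]) [0..<length u]"
    unfolding list_ex_iff by (rule bexI[of _ "length xs"]) (auto simp: u)
next
  assume "list_ex (\<lambda>k. u = hd u # take k (tl u) @ hd u # take k (tl u) @ [hd u]) [0..<length u]"
  then show "is_overlap u" unfolding is_overlap_def list_ex_iff by blast
qed

lemma of_hasov: "overlap_free y \<Longrightarrow> \<not> hasov (map y [0..<N])"
proof
  assume of: "overlap_free y" and h: "hasov (map y [0..<N])"
  then obtain i n where "is_overlap (take n (drop i (map y [0..<N])))"
    unfolding hasov_def list_ex_iff by blast
  moreover have "is_factor (take n (drop i (map y [0..<N]))) y"
    unfolding is_factor_def
    by (rule exI[of _ i]) (simp add: take_map drop_map map_add_upt min_def, auto simp: take_upt drop_upt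
         intro!: map_cong; cases "i \<le> N"; auto)
  ultimately show False using of unfolding overlap_free_def by blast
qed

lemma map7: "map y [0..<7] = [y 0, y 1, y 2, y 3, y 4, y 5, y 6]"
  by (simp add: upt_rec eval_nat_numeral)

lemma key: "overlap_free y \<Longrightarrow> \<not> hasov [y 0, y 1, y 2, y 3, y 4, y 5, y 6]"
  by (metis of_hasov map7)

lemma bw_code: "begins_with w y = list_all (\<lambda>i. y i = w ! i) [0..<length w]"
  unfolding begins_with_def list_all_iff by auto

theorem mainTheorem3:
  shows "\<forall>(X, i) \<in> set [(SB,2), (SB,4), (SD,2), (SD,4), (SC,1), (SC,2), (SC,4),
      (SE,2), (SE,3), (SE,4), (SF,0), (SF,1), (SF,2), (SF,4), (SJ,2), (SJ,3), (SJ,4),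
      (SK,2), (SK,3), (SK,4), (SI,0), (SI,2), (SI,3), (SI,4), (SG,1), (SG,2), (SG,4),
      (SH,1), (SH,2), (SH,4::nat)].
    \<not> (\<exists>x :: iword. prep (pw i) (mu x) \<in> X)"
  apply (simp add: SB_def SC_def SD_def SE_def SF_def SG_def SH_def SI_def SJ_def SK_def OF_def
      eval_nat_numeral)
  apply (intro conjI allI impI notI; drule key; simp add: bw_code upt_rec prep_def mu_def;
      case_tac "x 0"; case_tac "x (Suc 0)"; simp add: hasov_def is_overlap_code upt_rec)
  done

end
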